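(* Let $\mathcal Z$ be a finite zero-set, let $R_{a,b}\subseteq\mathcal Z$ with $a,b\ge1$, and let $Y$ be a nonempty Young diagram with $Y\subseteq R_{a-1,b-1}$. Then $$\gamma(\mathcal Z)\ge\frac12\min_{(k,\ell)\in\partial_oY}\Big(kb+\ell a-k\ell+\gamma(\mathcal Z^{\downarrow\ell})+\gamma(\mathcal Z^{\leftarrow k})\Big).$$
   Context: $\mathbb Z_+=\{0,1,2,\dots\}$, $R_{a,b}=([0,a-1]\times[0,b-1])\cap\mathbb Z_+^2$; a zero-set is a union of such rectangles (a finite one is a Young diagram). $\mathrm{row}(x,A),\mathrm{col}(x,A)$ count points of $A$ on the horizontal/vertical line through $x$; $\mathcal T(A)=A\cup\{x\notin A:(\mathrm{row}(x,A),\mathrm{col}(x,A))\notin\mathcal Z\}$; $A$ spans if $\bigcup_t\mathcal T^t(A)=\mathbb Z_+^2$; $\gamma(\mathcal Z)$ is the minimal size of a finite spanning set (with $\gamma(\emptyset)=0$). For integers $k\ge0$: $\mathcal Z^{\downarrow k}=\{(u,v-k):(u,v)\in\mathcal Z,v\ge k\}$ and $\mathcal Z^{\leftarrow k}=\{(u-k,v):(u,v)\in\mathcal Z,u\ge k\}$. The outer boundary is $\partial_oY=\{(u,v)\in\mathbb Z_+^2\setminus Y:(u-1,v)\in Y\text{ or }(u,v-1)\in Y\}$. *)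

theory Defs
  imports Complex_Main
begin

type_synonym pt = "nat \<times> nat"

definition rect :: "nat \<Rightarrow> nat \<Rightarrow> pt set" where
  "rect a b = {(i, j). i < a \<and> j < b}"

definition zero_set :: "pt set \<Rightarrow> bool" where
  "zero_set Z \<longleftrightarrow> (\<exists>S. Z = (\<Union>(a, b)\<in>S. rect a b))"

definition young_diagram :: "pt set \<Rightarrow> bool" where
  "young_diagram Y \<longleftrightarrow> zero_set Y \<and> finite Y"

definition row_pts :: "pt \<Rightarrow> pt set \<Rightarrow> pt set" where
  "row_pts x A = {y \<in> A. snd y = snd x}"

definition col_pts :: "pt \<Rightarrow> pt set \<Rightarrow> pt set" where
  "col_pts x A = {y \<in> A. fst y = fst x}"

text \<open>(row(x,A), col(x,A)) lies in Z; an infinite count never lies in Z \<subseteq> Z_+^2.\<close>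
definition counts_in :: "pt set \<Rightarrow> pt \<Rightarrow> pt set \<Rightarrow> bool" where
  "counts_in Z x A \<longleftrightarrow> finite (row_pts x A) \<and> finite (col_pts x A)
      \<and> (card (row_pts x A), card (col_pts x A)) \<in> Z"

definition step :: "pt set \<Rightarrow> pt set \<Rightarrow> pt set" where
  "step Z A = A \<union> {x. x \<notin> A \<and> \<not> counts_in Z x A}"

definition spans :: "pt set \<Rightarrow> pt set \<Rightarrow> bool" where
  "spans Z A \<longleftrightarrow> (\<Union>t. (step Z ^^ t) A) = UNIV"

definition gamma :: "pt set \<Rightarrow> nat" where
  "gamma Z = (if Z = {} then 0 else (LEAST n. \<exists>A. finite A \<and> card A = n \<and> spans Z A))"

definition shift_down :: "pt set \<Rightarrow> nat \<Rightarrow> pt set" where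
  "shift_down Z k = {(u, v - k) | u v. (u, v) \<in> Z \<and> v \<ge> k}"

definition shift_left :: "pt set \<Rightarrow> nat \<Rightarrow> pt set" where
  "shift_left Z k = {(u - k, v) | u v. (u, v) \<in> Z \<and> u \<ge> k}"

definition outer_boundary :: "pt set \<Rightarrow> pt set" where
  "outer_boundary Y = {(u, v). (u, v) \<notin> Y \<and>
      ((u \<ge> 1 \<and> (u - 1, v) \<in> Y) \<or> (v \<ge> 1 \<and> (u, v - 1) \<in> Y))}"

end

theory Submission
  imports Defs "HOL-Library.Infinite_Set"
begin


lemma zero_set_down:
  assumes "zero_set Z" "(u,v) \<in> Z" "u' \<le> u" "v' \<le> v"
  shows "(u',v') \<in> Z"
  using assms unfolding zero_set_def rect_def by fastforce

lemma step_sub: "A \<subseteq> step Z A"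
  unfolding step_def by auto

lemma step_mono:
  assumes Z: "zero_set Z" and AB: "A \<subseteq> B"
  shows "step Z A \<subseteq> step Z B"
proof
  fix x assume x: "x \<in> step Z A"
  show "x \<in> step Z B"
  proof (cases "x \<in> B")
    case True then show ?thesis by (simp add: step_def)
  next
    case False
    with x AB have nc: "\<not> counts_in Z x A" by (auto simp: step_def)
    have "\<not> counts_in Z x B"
    proof
      assume c: "counts_in Z x B"
      have rs: "row_pts x A \<subseteq> row_pts x B" "col_pts x A \<subseteq> col_pts x B"
        using AB by (auto simp: row_pts_def col_pts_def)
      from c have f: "finite (row_pts x B)" "finite (col_pts x B)"
        and m: "(card (row_pts x B), card (col_pts x B)) \<in> Z"
        by (auto simp: counts_in_def)
      have "finite (row_pts x A)" "finite (col_pts x A)" using rs f finite_subset by auto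
      moreover have "(card (row_pts x A), card (col_pts x A)) \<in> Z"
        using zero_set_down[OF Z m] card_mono[OF f(1) rs(1)] card_mono[OF f(2) rs(2)] by blast
      ultimately show False using nc by (simp add: counts_in_def)
    qed
    then show ?thesis using False by (simp add: step_def)
  qed
qed

lemma funpow_step_mono:
  assumes "zero_set Z" "A \<subseteq> B"
  shows "(step Z ^^ t) A \<subseteq> (step Z ^^ t) B"
  using assms by (induction t) (auto intro: step_mono[THEN subsetD])

lemma funpow_step_inc:
  assumes "s \<le> t" shows "(step Z ^^ s) A \<subseteq> (step Z ^^ t) A"
  using assms
proof (induction t)
  case 0 then show ?case by simp
next
  case (Suc t)
  then show ?case
    using step_sub[of "(step Z ^^ t) A" Z] by (cases "s = Suc t") auto
qed

lemma spans_mono: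
  assumes "zero_set Z" "A \<subseteq> B" "spans Z A" shows "spans Z B"
  unfolding spans_def
proof (rule set_eqI)
  fix x :: pt
  have "x \<in> (\<Union>t. (step Z ^^ t) A)" using assms(3) unfolding spans_def by simp
  then obtain t where "x \<in> (step Z ^^ t) A" by blast
  then have "x \<in> (step Z ^^ t) B" using funpow_step_mono[OF assms(1,2)] by blast
  then show "x \<in> (\<Union>t. (step Z ^^ t) B) \<longleftrightarrow> x \<in> UNIV" by blast
qed

lemma shift_left_iff: "(r, c) \<in> shift_left Z k \<longleftrightarrow> (r + k, c) \<in> Z"
  unfolding shift_left_def by force

lemma shift_down_iff: "(r, c) \<in> shift_down Z k \<longleftrightarrow> (r, c + k) \<in> Z"
  unfolding shift_down_def by force



lemma col_compress_step:
  fixes \<phi> :: "nat \<Rightarrow> nat" and C :: "nat set"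
  assumes inj: "inj \<phi>" and rng: "range \<phi> = - C" and fin: "finite C"
  defines "g \<equiv> (\<lambda>(u::nat, v::nat). (\<phi> u, v))"
  defines "F \<equiv> {p::pt. fst p \<in> C}"
  shows "step Z (F \<union> g ` D) = F \<union> g ` (step (shift_left Z (card C)) D)"
proof -
  have ginj: "inj g" using inj unfolding g_def inj_def by auto
  have phinC: "\<phi> v \<notin> C" for v using rng rangeI[of \<phi> v] by blast
  have gF: "g q \<notin> F" for q
  proof -
    obtain u v where "q = (u,v)" by (cases q)
    then show ?thesis using phinC[of u] unfolding g_def F_def by simp
  qed
  have key: "g (u,v) \<in> step Z (F \<union> g ` D) \<longleftrightarrow> (u,v) \<in> step (shift_left Z (card C)) D" for u v
  proof -
    have inD: "g (u,v) \<in> F \<union> g ` D \<longleftrightarrow> (u,v) \<in> D"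
    proof
      assume "g (u,v) \<in> F \<union> g ` D"
      then have "g (u,v) \<in> g ` D" using gF[of "(u,v)"] by blast
      then show "(u,v) \<in> D" by (simp add: inj_image_mem_iff[OF ginj])
    next
      assume "(u,v) \<in> D"
      then show "g (u,v) \<in> F \<union> g ` D" by blast
    qed
    have row: "row_pts (g (u,v)) (F \<union> g ` D) = (C \<times> {v}) \<union> g ` row_pts (u,v) D"
      unfolding row_pts_def F_def g_def by (auto split: prod.splits)
    have col: "col_pts (g (u,v)) (F \<union> g ` D) = g ` col_pts (u,v) D"
      using phinC[of u]
      unfolding col_pts_def F_def g_def by (auto simp: image_iff inj_eq[OF inj] split: prod.splits)
    have s1: "g ` row_pts (u,v) D \<subseteq> - F" using gF by blast
    have s2: "C \<times> {v} \<subseteq> F" unfolding F_def by auto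
    have disj: "(C \<times> {v}) \<inter> g ` row_pts (u,v) D = {}" using s1 s2 by blast
    have ginjS: "inj_on g S" for S by (rule inj_on_subset[OF ginj subset_UNIV])
    have finrow: "finite (row_pts (g (u,v)) (F \<union> g ` D)) \<longleftrightarrow> finite (row_pts (u,v) D)"
      unfolding row using fin finite_image_iff[OF ginjS] by simp
    have fincol: "finite (col_pts (g (u,v)) (F \<union> g ` D)) \<longleftrightarrow> finite (col_pts (u,v) D)"
      unfolding col using finite_image_iff[OF ginjS] by simp
    have cardrow: "finite (row_pts (u,v) D) \<Longrightarrow> card (row_pts (g (u,v)) (F \<union> g ` D)) = card C + card (row_pts (u,v) D)"
    proof -
      assume f: "finite (row_pts (u,v) D)"
      have "card (C \<times> {v}) = card C" by (simp add: card_cartesian_product)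
      moreover have "card (g ` row_pts (u,v) D) = card (row_pts (u,v) D)" by (rule card_image[OF ginjS])
      ultimately show ?thesis unfolding row using card_Un_disjoint[OF _ _ disj] fin f by simp
    qed
    have cardcol: "card (col_pts (g (u,v)) (F \<union> g ` D)) = card (col_pts (u,v) D)"
      unfolding col by (rule card_image[OF ginjS])
    have cnt: "counts_in Z (g (u,v)) (F \<union> g ` D) \<longleftrightarrow> counts_in (shift_left Z (card C)) (u,v) D"
      unfolding counts_in_def using finrow fincol cardrow cardcol
      by (auto simp: shift_left_iff add.commute)
    show ?thesis unfolding step_def using inD cnt by auto
  qed
  show ?thesis
  proof (rule set_eqI)
    fix p :: pt
    obtain x v where p: "p = (x, v)" by (cases p)
    show "p \<in> step Z (F \<union> g ` D) \<longleftrightarrow> p \<in> F \<union> g ` step (shift_left Z (card C)) D"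
    proof (cases "x \<in> C")
      case True
      then show ?thesis using p step_sub[of "F \<union> g ` D" Z] unfolding F_def by auto
    next
      case False
      then obtain u where u: "x = \<phi> u" using rng by auto
      have pg: "p = g (u,v)" using p u g_def by simp
      have mem: "p \<in> F \<union> g ` S \<longleftrightarrow> (u,v) \<in> S" for S
        using gF[of "(u,v)"] pg by (simp add: inj_image_mem_iff[OF ginj])
      show ?thesis using key[of u v] mem[of D] mem[of "step (shift_left Z (card C)) D"] pg by simp
    qed
  qed
qed

lemma col_compress_iter:
  fixes \<phi> :: "nat \<Rightarrow> nat" and C :: "nat set"
  assumes inj: "inj \<phi>" and rng: "range \<phi> = - C" and fin: "finite C"
  shows "(step Z ^^ t) ({p. fst p \<in> C} \<union> (\<lambda>(u, v). (\<phi> u, v)) ` D)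
       = {p. fst p \<in> C} \<union> (\<lambda>(u, v). (\<phi> u, v)) ` ((step (shift_left Z (card C)) ^^ t) D)"
  by (induction t) (simp_all add: col_compress_step[OF assms])

lemma gamma_le:
  assumes "finite B" "spans Z B"
  shows "gamma Z \<le> card B"
  unfolding gamma_def using assms by (auto intro: Least_le)

lemma gamma_left:
  assumes Z: "zero_set Z" and fA: "finite A" and sp: "spans Z A" and fin: "finite C"
  shows "gamma (shift_left Z (card C)) + card (A \<inter> {p. fst p \<in> C}) \<le> card A"
proof -
  let ?F = "{p::pt. fst p \<in> C}"
  have infC: "infinite (- C)" using fin by (simp add: Compl_eq_Diff_UNIV infinite_UNIV_nat)
  define \<phi> where "\<phi> = enumerate (- C)"
  have bij: "bij_betw \<phi> UNIV (- C)" unfolding \<phi>_def by (rule bij_enumerate[OF infC])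
  have inj: "inj \<phi>" and rng: "range \<phi> = - C" using bij by (auto simp: bij_betw_def)
  have phinC: "\<phi> u \<notin> C" for u using rng rangeI[of \<phi> u] by blast
  define g where "g = (\<lambda>(u::nat, v::nat). (\<phi> u, v))"
  have gF: "g q \<notin> ?F" for q
  proof -
    obtain u v where "q = (u,v)" by (cases q)
    then show ?thesis using phinC[of u] unfolding g_def by simp
  qed
  have ginj: "inj g" using inj unfolding g_def inj_def by auto
  define B where "B = g -` A"
  have gB: "g ` B = A - ?F"
  proof
    show "g ` B \<subseteq> A - ?F" using gF unfolding B_def by auto
    show "A - ?F \<subseteq> g ` B"
    proof
      fix p assume p: "p \<in> A - ?F"
      obtain x v where xv: "p = (x,v)" by (cases p)
      then have "x \<in> - C" using p by auto
      then obtain u where "x = \<phi> u" using rng by auto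
      then have "p = g (u,v)" using xv g_def by simp
      then show "p \<in> g ` B" using p B_def by auto
    qed
  qed
  have fB: "finite B" unfolding B_def by (rule finite_vimageI[OF fA ginj])
  have ginjB: "inj_on g B" by (rule inj_on_subset[OF ginj subset_UNIV])
  have cB: "card B = card (A - ?F)" using card_image[OF ginjB] gB by simp
  have sub: "A \<subseteq> ?F \<union> g ` B" using gB by auto
  have spF: "spans Z (?F \<union> g ` B)" using spans_mono[OF Z sub sp] .
  have spB: "spans (shift_left Z (card C)) B"
    unfolding spans_def
  proof (rule set_eqI, rule iffI)
    fix q :: pt assume "q \<in> UNIV"
    obtain u v where q: "q = (u,v)" by (cases q)
    have ng: "g q \<notin> ?F" by (rule gF)
    have "g q \<in> (\<Union>t. (step Z ^^ t) (?F \<union> g ` B))" using spF unfolding spans_def by simp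
    then obtain t where tm: "g q \<in> (step Z ^^ t) (?F \<union> g ` B)" by blast
    have eq: "(step Z ^^ t) (?F \<union> g ` B) = ?F \<union> g ` ((step (shift_left Z (card C)) ^^ t) B)"
      unfolding g_def by (rule col_compress_iter[OF inj rng fin])
    from tm have "g q \<in> ?F \<union> g ` ((step (shift_left Z (card C)) ^^ t) B)" unfolding eq .
    then have "g q \<in> g ` ((step (shift_left Z (card C)) ^^ t) B)" using ng by blast
    then obtain q' where q': "q' \<in> (step (shift_left Z (card C)) ^^ t) B" "g q = g q'" by blast
    then have "q = q'" using ginj by (simp add: inj_eq)
    then have "q \<in> (step (shift_left Z (card C)) ^^ t) B" using q' by simp
    then show "q \<in> (\<Union>t. (step (shift_left Z (card C)) ^^ t) B)" by blast
  qed simp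
  have "gamma (shift_left Z (card C)) \<le> card B" by (rule gamma_le[OF fB spB])
  moreover have "card A = card (A \<inter> ?F) + card (A - ?F)"
    by (rule card_Int_Diff[OF fA])
  ultimately show ?thesis using cB by linarith
qed



lemma row_compress_step:
  fixes \<phi> :: "nat \<Rightarrow> nat" and C :: "nat set"
  assumes inj: "inj \<phi>" and rng: "range \<phi> = - C" and fin: "finite C"
  defines "g \<equiv> (\<lambda>(u::nat, v::nat). (u, \<phi> v))"
  defines "F \<equiv> {p::pt. snd p \<in> C}"
  shows "step Z (F \<union> g ` D) = F \<union> g ` (step (shift_down Z (card C)) D)"
proof -
  have ginj: "inj g" using inj unfolding g_def inj_def by auto
  have phinC: "\<phi> v \<notin> C" for v using rng rangeI[of \<phi> v] by blast
  have gF: "g q \<notin> F" for q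
  proof -
    obtain u v where "q = (u,v)" by (cases q)
    then show ?thesis using phinC[of v] unfolding g_def F_def by simp
  qed
  have key: "g (u,v) \<in> step Z (F \<union> g ` D) \<longleftrightarrow> (u,v) \<in> step (shift_down Z (card C)) D" for u v
  proof -
    have inD: "g (u,v) \<in> F \<union> g ` D \<longleftrightarrow> (u,v) \<in> D"
    proof
      assume "g (u,v) \<in> F \<union> g ` D"
      then have "g (u,v) \<in> g ` D" using gF[of "(u,v)"] by blast
      then show "(u,v) \<in> D" by (simp add: inj_image_mem_iff[OF ginj])
    next
      assume "(u,v) \<in> D"
      then show "g (u,v) \<in> F \<union> g ` D" by blast
    qed
    have col: "col_pts (g (u,v)) (F \<union> g ` D) = ({u} \<times> C) \<union> g ` col_pts (u,v) D"
      unfolding col_pts_def F_def g_def by (auto split: prod.splits)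
    have row: "row_pts (g (u,v)) (F \<union> g ` D) = g ` row_pts (u,v) D"
      using phinC[of v]
      unfolding row_pts_def F_def g_def by (auto simp: image_iff inj_eq[OF inj] split: prod.splits)
    have s1: "g ` col_pts (u,v) D \<subseteq> - F" using gF by blast
    have s2: "{u} \<times> C \<subseteq> F" unfolding F_def by auto
    have disj: "({u} \<times> C) \<inter> g ` col_pts (u,v) D = {}" using s1 s2 by blast
    have ginjS: "inj_on g S" for S by (rule inj_on_subset[OF ginj subset_UNIV])
    have fincol: "finite (col_pts (g (u,v)) (F \<union> g ` D)) \<longleftrightarrow> finite (col_pts (u,v) D)"
      unfolding col using fin finite_image_iff[OF ginjS] by simp
    have finrow: "finite (row_pts (g (u,v)) (F \<union> g ` D)) \<longleftrightarrow> finite (row_pts (u,v) D)"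
      unfolding row using finite_image_iff[OF ginjS] by simp
    have cardcol: "finite (col_pts (u,v) D) \<Longrightarrow> card (col_pts (g (u,v)) (F \<union> g ` D)) = card C + card (col_pts (u,v) D)"
    proof -
      assume f: "finite (col_pts (u,v) D)"
      have "card ({u} \<times> C) = card C" by (simp add: card_cartesian_product_singleton)
      moreover have "card (g ` col_pts (u,v) D) = card (col_pts (u,v) D)" by (rule card_image[OF ginjS])
      ultimately show ?thesis unfolding col using card_Un_disjoint[OF _ _ disj] fin f by simp
    qed
    have cardrow: "card (row_pts (g (u,v)) (F \<union> g ` D)) = card (row_pts (u,v) D)"
      unfolding row by (rule card_image[OF ginjS])
    have cnt: "counts_in Z (g (u,v)) (F \<union> g ` D) \<longleftrightarrow> counts_in (shift_down Z (card C)) (u,v) D"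
      unfolding counts_in_def using finrow fincol cardrow cardcol
      by (auto simp: shift_down_iff add.commute)
    show ?thesis unfolding step_def using inD cnt by auto
  qed
  show ?thesis
  proof (rule set_eqI)
    fix p :: pt
    obtain x v where p: "p = (x, v)" by (cases p)
    show "p \<in> step Z (F \<union> g ` D) \<longleftrightarrow> p \<in> F \<union> g ` step (shift_down Z (card C)) D"
    proof (cases "v \<in> C")
      case True
      then show ?thesis using p step_sub[of "F \<union> g ` D" Z] unfolding F_def by auto
    next
      case False
      then obtain u where u: "v = \<phi> u" using rng by auto
      have pg: "p = g (x,u)" using p u g_def by simp
      have mem: "p \<in> F \<union> g ` S \<longleftrightarrow> (x,u) \<in> S" for S
        using gF[of "(x,u)"] pg by (simp add: inj_image_mem_iff[OF ginj])
      show ?thesis using key[of x u] mem[of D] mem[of "step (shift_down Z (card C)) D"] pg by simp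
    qed
  qed
qed

lemma row_compress_iter:
  fixes \<phi> :: "nat \<Rightarrow> nat" and C :: "nat set"
  assumes inj: "inj \<phi>" and rng: "range \<phi> = - C" and fin: "finite C"
  shows "(step Z ^^ t) ({p. snd p \<in> C} \<union> (\<lambda>(u, v). (u, \<phi> v)) ` D)
       = {p. snd p \<in> C} \<union> (\<lambda>(u, v). (u, \<phi> v)) ` ((step (shift_down Z (card C)) ^^ t) D)"
  by (induction t) (simp_all add: row_compress_step[OF assms])

lemma gamma_down:
  assumes Z: "zero_set Z" and fA: "finite A" and sp: "spans Z A" and fin: "finite C"
  shows "gamma (shift_down Z (card C)) + card (A \<inter> {p. snd p \<in> C}) \<le> card A"
proof -
  let ?F = "{p::pt. snd p \<in> C}"
  have infC: "infinite (- C)" using fin by (simp add: Compl_eq_Diff_UNIV infinite_UNIV_nat)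
  define \<phi> where "\<phi> = enumerate (- C)"
  have bij: "bij_betw \<phi> UNIV (- C)" unfolding \<phi>_def by (rule bij_enumerate[OF infC])
  have inj: "inj \<phi>" and rng: "range \<phi> = - C" using bij by (auto simp: bij_betw_def)
  have phinC: "\<phi> u \<notin> C" for u using rng rangeI[of \<phi> u] by blast
  define g where "g = (\<lambda>(u::nat, v::nat). (u, \<phi> v))"
  have gF: "g q \<notin> ?F" for q
  proof -
    obtain u v where "q = (u,v)" by (cases q)
    then show ?thesis using phinC[of v] unfolding g_def by simp
  qed
  have ginj: "inj g" using inj unfolding g_def inj_def by auto
  define B where "B = g -` A"
  have gB: "g ` B = A - ?F"
  proof
    show "g ` B \<subseteq> A - ?F" using gF unfolding B_def by auto
    show "A - ?F \<subseteq> g ` B"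
    proof
      fix p assume p: "p \<in> A - ?F"
      obtain x v where xv: "p = (x,v)" by (cases p)
      then have "v \<in> - C" using p by auto
      then obtain u where "v = \<phi> u" using rng by auto
      then have "p = g (x,u)" using xv g_def by simp
      then show "p \<in> g ` B" using p B_def by auto
    qed
  qed
  have fB: "finite B" unfolding B_def by (rule finite_vimageI[OF fA ginj])
  have ginjB: "inj_on g B" by (rule inj_on_subset[OF ginj subset_UNIV])
  have cB: "card B = card (A - ?F)" using card_image[OF ginjB] gB by simp
  have sub: "A \<subseteq> ?F \<union> g ` B" using gB by auto
  have spF: "spans Z (?F \<union> g ` B)" using spans_mono[OF Z sub sp] .
  have spB: "spans (shift_down Z (card C)) B"
    unfolding spans_def
  proof (rule set_eqI, rule iffI)
    fix q :: pt assume "q \<in> UNIV"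
    have ng: "g q \<notin> ?F" by (rule gF)
    have "g q \<in> (\<Union>t. (step Z ^^ t) (?F \<union> g ` B))" using spF unfolding spans_def by simp
    then obtain t where tm: "g q \<in> (step Z ^^ t) (?F \<union> g ` B)" by blast
    have eq: "(step Z ^^ t) (?F \<union> g ` B) = ?F \<union> g ` ((step (shift_down Z (card C)) ^^ t) B)"
      unfolding g_def by (rule row_compress_iter[OF inj rng fin])
    from tm have "g q \<in> ?F \<union> g ` ((step (shift_down Z (card C)) ^^ t) B)" unfolding eq .
    then have "g q \<in> g ` ((step (shift_down Z (card C)) ^^ t) B)" using ng by blast
    then obtain q' where q': "q' \<in> (step (shift_down Z (card C)) ^^ t) B" "g q = g q'" by blast
    then have "q = q'" using ginj by (simp add: inj_eq)
    then have "q \<in> (step (shift_down Z (card C)) ^^ t) B" using q' by simp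
    then show "q \<in> (\<Union>t. (step (shift_down Z (card C)) ^^ t) B)" by blast
  qed simp
  have "gamma (shift_down Z (card C)) \<le> card B" by (rule gamma_le[OF fB spB])
  moreover have "card A = card (A \<inter> ?F) + card (A - ?F)"
    by (rule card_Int_Diff[OF fA])
  ultimately show ?thesis using cB by linarith
qed



definition valid :: "(nat \<Rightarrow> nat) \<Rightarrow> (nat \<Rightarrow> nat) \<Rightarrow> nat set \<Rightarrow> nat set \<Rightarrow> bool" where
  "valid tc tr C R \<longleftrightarrow> finite C \<and> finite R
     \<and> (\<forall>x\<in>C. \<forall>x'. tc x' < tc x \<longrightarrow> x' \<in> C)
     \<and> (\<forall>x\<in>C. \<forall>y. tr y < tc x \<longrightarrow> y \<in> R)
     \<and> (\<forall>y\<in>R. \<forall>y'. tr y' < tr y \<longrightarrow> y' \<in> R)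
     \<and> (\<forall>y\<in>R. \<forall>x. tc x < tr y \<longrightarrow> x \<in> C)"

lemma valid_extend:
  assumes v: "valid tc tr C R"
  shows "(\<exists>x. x \<notin> C \<and> valid tc tr (insert x C) R) \<or> (\<exists>y. y \<notin> R \<and> valid tc tr C (insert y R))"
proof -
  have fC: "finite C" and fR: "finite R"
    and c1: "\<forall>x\<in>C. \<forall>x'. tc x' < tc x \<longrightarrow> x' \<in> C"
    and c2: "\<forall>x\<in>C. \<forall>y. tr y < tc x \<longrightarrow> y \<in> R"
    and c3: "\<forall>y\<in>R. \<forall>y'. tr y' < tr y \<longrightarrow> y' \<in> R"
    and c4: "\<forall>y\<in>R. \<forall>x. tc x < tr y \<longrightarrow> x \<in> C"
    using v unfolding valid_def by blast+
  define M where "M = tc ` (- C) \<union> tr ` (- R)"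
  obtain x0 where "x0 \<notin> C" using fC ex_new_if_finite[OF infinite_UNIV_nat] by blast
  then have "tc x0 \<in> M" unfolding M_def by auto
  define m where "m = (LEAST t. t \<in> M)"
  have mM: "m \<in> M" unfolding m_def using \<open>tc x0 \<in> M\<close> by (rule LeastI)
  have mle: "\<And>t. t \<in> M \<Longrightarrow> m \<le> t" unfolding m_def by (rule Least_le)
  have lc: "\<And>x. tc x < m \<Longrightarrow> x \<in> C"
  proof (rule ccontr)
    fix x assume "tc x < m" "x \<notin> C"
    then have "tc x \<in> M" unfolding M_def by auto
    then show False using mle \<open>tc x < m\<close> by fastforce
  qed
  have lr: "\<And>y. tr y < m \<Longrightarrow> y \<in> R"
  proof (rule ccontr)
    fix y assume "tr y < m" "y \<notin> R"
    then have "tr y \<in> M" unfolding M_def by auto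
    then show False using mle \<open>tr y < m\<close> by fastforce
  qed
  from mM show ?thesis unfolding M_def
  proof
    assume "m \<in> tc ` (- C)"
    then obtain x where x: "x \<notin> C" "m = tc x" by auto
    have lc': "\<And>x'. tc x' < tc x \<Longrightarrow> x' \<in> C" using lc x(2) by simp
    have lr': "\<And>y. tr y < tc x \<Longrightarrow> y \<in> R" using lr x(2) by simp
    have d1: "\<forall>x1\<in>insert x C. \<forall>x'. tc x' < tc x1 \<longrightarrow> x' \<in> insert x C"
    proof (intro ballI allI impI)
      fix x1 x' assume "x1 \<in> insert x C" "tc x' < tc x1"
      then show "x' \<in> insert x C" using c1 lc'[of x'] by (cases "x1 = x") auto
    qed
    have d2: "\<forall>x1\<in>insert x C. \<forall>y. tr y < tc x1 \<longrightarrow> y \<in> R"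
    proof (intro ballI allI impI)
      fix x1 y assume "x1 \<in> insert x C" "tr y < tc x1"
      then show "y \<in> R" using c2 lr'[of y] by (cases "x1 = x") auto
    qed
    have d4: "\<forall>y\<in>R. \<forall>x'. tc x' < tr y \<longrightarrow> x' \<in> insert x C"
      using c4 by blast
    have "valid tc tr (insert x C) R"
      unfolding valid_def using fC fR d1 d2 c3 d4 finite_insert[of x C] by blast
    then show ?thesis using x by blast
  next
    assume "m \<in> tr ` (- R)"
    then obtain y where y: "y \<notin> R" "m = tr y" by auto
    have lc': "\<And>x'. tc x' < tr y \<Longrightarrow> x' \<in> C" using lc y(2) by simp
    have lr': "\<And>y'. tr y' < tr y \<Longrightarrow> y' \<in> R" using lr y(2) by simp
    have d2: "\<forall>x1\<in>C. \<forall>y'. tr y' < tc x1 \<longrightarrow> y' \<in> insert y R"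
      using c2 by blast
    have d3: "\<forall>y1\<in>insert y R. \<forall>y'. tr y' < tr y1 \<longrightarrow> y' \<in> insert y R"
    proof (intro ballI allI impI)
      fix y1 y' assume "y1 \<in> insert y R" "tr y' < tr y1"
      then show "y' \<in> insert y R" using c3 lr'[of y'] by (cases "y1 = y") auto
    qed
    have d4: "\<forall>y1\<in>insert y R. \<forall>x'. tc x' < tr y1 \<longrightarrow> x' \<in> C"
    proof (intro ballI allI impI)
      fix y1 x' assume "y1 \<in> insert y R" "tc x' < tr y1"
      then show "x' \<in> C" using c4 lc'[of x'] by (cases "y1 = y") auto
    qed
    have "valid tc tr C (insert y R)"
      unfolding valid_def using fC fR c1 d2 d3 d4 finite_insert[of y R] by blast
    then show ?thesis using y by blast
  qed
qed

lemma valid_path: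
  assumes Y0: "(0,0) \<in> Y"
  shows "(\<exists>C R. valid tc tr C R \<and> card C + card R = n \<and> (card C, card R) \<in> Y)
       \<or> (\<exists>C R. valid tc tr C R \<and> (card C, card R) \<in> outer_boundary Y)"
proof (induction n)
  case 0
  have "valid tc tr {} {}" unfolding valid_def by auto
  then show ?case using Y0 by force
next
  case (Suc n)
  then show ?case
  proof
    assume "\<exists>C R. valid tc tr C R \<and> card C + card R = n \<and> (card C, card R) \<in> Y"
    then obtain C R where v: "valid tc tr C R" and n: "card C + card R = n" and y: "(card C, card R) \<in> Y"
      by blast
    have fC: "finite C" and fR: "finite R" using v by (auto simp: valid_def)
    from valid_extend[OF v] show ?thesis
    proof
      assume "\<exists>x. x \<notin> C \<and> valid tc tr (insert x C) R"
      then obtain x where x: "x \<notin> C" "valid tc tr (insert x C) R" by blast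
      have c: "card (insert x C) = Suc (card C)" using x fC by simp
      show ?thesis
      proof (cases "(Suc (card C), card R) \<in> Y")
        case True then show ?thesis using x c n by (metis add_Suc)
      next
        case False
        then have "(card (insert x C), card R) \<in> outer_boundary Y"
          using y c unfolding outer_boundary_def by auto
        then show ?thesis using x by blast
      qed
    next
      assume "\<exists>y. y \<notin> R \<and> valid tc tr C (insert y R)"
      then obtain z where z: "z \<notin> R" "valid tc tr C (insert z R)" by blast
      have c: "card (insert z R) = Suc (card R)" using z fR by simp
      show ?thesis
      proof (cases "(card C, Suc (card R)) \<in> Y")
        case True then show ?thesis using z c n by (metis add_Suc_right)
      next
        case False
        then have "(card C, card (insert z R)) \<in> outer_boundary Y"
          using y c unfolding outer_boundary_def by auto
        then show ?thesis using z by blast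
      qed
    qed
  next
    assume "\<exists>C R. valid tc tr C R \<and> (card C, card R) \<in> outer_boundary Y"
    then show ?thesis by blast
  qed
qed

lemma valid_boundary:
  assumes Y0: "(0,0) \<in> Y" and Ys: "Y \<subseteq> rect a b"
  shows "\<exists>C R. valid tc tr C R \<and> (card C, card R) \<in> outer_boundary Y"
proof -
  have "\<not> (\<exists>C R. valid tc tr C R \<and> card C + card R = a + b \<and> (card C, card R) \<in> Y)"
    using Ys unfolding rect_def by fastforce
  then show ?thesis using valid_path[OF Y0, of tc tr "a + b"] by blast
qed



locale growth =
  fixes Z A :: "pt set" and a b :: nat
  assumes Z: "zero_set Z" and rZ: "rect a b \<subseteq> Z" and sp: "spans Z A" and fA: "finite A"
begin

abbreviation At :: "nat \<Rightarrow> pt set" where "At t \<equiv> (step Z ^^ t) A"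

definition colset :: "nat \<Rightarrow> nat \<Rightarrow> pt set" where "colset t x = {q \<in> At t. fst q = x}"
definition rowset :: "nat \<Rightarrow> nat \<Rightarrow> pt set" where "rowset t y = {q \<in> At t. snd q = y}"

definition hC :: "nat \<Rightarrow> nat \<Rightarrow> bool" where
  "hC t x \<longleftrightarrow> \<not> (finite (colset t x) \<and> card (colset t x) < b)"
definition hR :: "nat \<Rightarrow> nat \<Rightarrow> bool" where
  "hR t y \<longleftrightarrow> \<not> (finite (rowset t y) \<and> card (rowset t y) < a)"

lemma added:
  assumes "p \<in> At t" "p \<notin> A"
  shows "\<exists>s<t. hC s (fst p) \<or> hR s (snd p)"
  using assms(1)
proof (induction t)
  case 0 then show ?case using assms(2) by simp
next
  case (Suc t)
  show ?case
  proof (cases "p \<in> At t")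
    case True
    then show ?thesis using Suc.IH less_Suc_eq by blast
  next
    case False
    have e: "p \<in> step Z (At t)" using Suc.prems by simp
    have nc: "\<not> counts_in Z p (At t)" using e False unfolding step_def[of Z "At t"] by blast
    have r: "row_pts p (At t) = rowset t (snd p)" unfolding row_pts_def rowset_def by auto
    have c: "col_pts p (At t) = colset t (fst p)" unfolding col_pts_def colset_def by auto
    have "hC t (fst p) \<or> hR t (snd p)"
    proof (rule ccontr)
      assume "\<not> (hC t (fst p) \<or> hR t (snd p))"
      then have f: "finite (colset t (fst p))" "card (colset t (fst p)) < b"
        "finite (rowset t (snd p))" "card (rowset t (snd p)) < a" unfolding hC_def hR_def by auto
      then have "(card (rowset t (snd p)), card (colset t (fst p))) \<in> Z"
        using rZ unfolding rect_def by auto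
      then have "counts_in Z p (At t)" using f r c unfolding counts_in_def by simp
      then show False using nc by simp
    qed
    then show ?thesis by blast
  qed
qed

lemma hC_mono:
  assumes "s \<le> t" "hC s x" shows "hC t x"
proof -
  have "colset s x \<subseteq> colset t x" using funpow_step_inc[OF assms(1)] unfolding colset_def by auto
  then show ?thesis using assms(2) unfolding hC_def
    by (meson card_mono finite_subset le_less_trans)
qed

lemma hR_mono:
  assumes "s \<le> t" "hR s x" shows "hR t x"
proof -
  have "rowset s x \<subseteq> rowset t x" using funpow_step_inc[OF assms(1)] unfolding rowset_def by auto
  then show ?thesis using assms(2) unfolding hR_def
    by (meson card_mono finite_subset le_less_trans)
qed

lemma eventually_in:
  fixes n :: nat and f :: "nat \<Rightarrow> pt"
  shows "\<exists>T. \<forall>j<n. f j \<in> At T"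
proof (induction n)
  case 0 then show ?case by simp
next
  case (Suc n)
  then obtain T where T: "\<forall>j<n. f j \<in> At T" by blast
  have "f n \<in> (\<Union>t. At t)" using sp unfolding spans_def by simp
  then obtain t where t: "f n \<in> At t" by blast
  have "\<forall>j<Suc n. f j \<in> At (max T t)"
  proof (intro allI impI)
    fix j assume "j < Suc n"
    then show "f j \<in> At (max T t)"
      using T t funpow_step_inc[of T "max T t" Z A] funpow_step_inc[of t "max T t" Z A]
      by (metis less_Suc_eq max.cobounded1 max.cobounded2 subsetD)
  qed
  then show ?case by blast
qed

lemma hC_ex: "\<exists>t. hC t x"
proof -
  obtain T where T: "\<forall>j<b. (x, j) \<in> At T" using eventually_in[of b "\<lambda>j. (x,j)"] by blast
  have sub: "(\<lambda>j. (x,j)) ` {..<b} \<subseteq> colset T x" using T unfolding colset_def by auto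
  have "card ((\<lambda>j. (x,j)) ` {..<b}) = b" by (simp add: card_image inj_on_def)
  then have "hC T x" using sub unfolding hC_def by (metis card_mono not_le)
  then show ?thesis by blast
qed

lemma hR_ex: "\<exists>t. hR t y"
proof -
  obtain T where T: "\<forall>j<a. (j, y) \<in> At T" using eventually_in[of a "\<lambda>j. (j,y)"] by blast
  have sub: "(\<lambda>j. (j,y)) ` {..<a} \<subseteq> rowset T y" using T unfolding rowset_def by auto
  have "card ((\<lambda>j. (j,y)) ` {..<a}) = a" by (simp add: card_image inj_on_def)
  then have "hR T y" using sub unfolding hR_def by (metis card_mono not_le)
  then show ?thesis by blast
qed

definition tc :: "nat \<Rightarrow> nat" where "tc x = (LEAST t. hC t x)"
definition tr :: "nat \<Rightarrow> nat" where "tr y = (LEAST t. hR t y)"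

lemma tc_h: "hC (tc x) x" unfolding tc_def using hC_ex by (rule LeastI_ex)
lemma tr_h: "hR (tr y) y" unfolding tr_def using hR_ex by (rule LeastI_ex)
lemma tc_less: "s < tc x \<Longrightarrow> \<not> hC s x" unfolding tc_def by (rule not_less_Least)
lemma tr_le: "hR s y \<Longrightarrow> tr y \<le> s" unfolding tr_def by (rule Least_le)
lemma tr_less: "s < tr y \<Longrightarrow> \<not> hR s y" unfolding tr_def by (rule not_less_Least)
lemma tc_le: "hC s x \<Longrightarrow> tc x \<le> s" unfolding tc_def by (rule Least_le)

lemma col_count:
  assumes v: "valid tc tr C R" and x: "x \<in> C"
  shows "b \<le> card {q \<in> A. fst q = x} + card {y \<in> R. tr y < tc x}"
proof -
  have fR: "finite R" using v by (simp add: valid_def)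
  let ?S = "colset (tc x) x"
  let ?T = "{q \<in> A. fst q = x} \<union> (\<lambda>y. (x,y)) ` {y \<in> R. tr y < tc x}"
  have sub: "?S \<subseteq> ?T"
  proof
    fix q assume q: "q \<in> ?S"
    show "q \<in> ?T"
    proof (cases "q \<in> A")
      case True then show ?thesis using q unfolding colset_def by auto
    next
      case False
      have qx: "fst q = x" and qa: "q \<in> At (tc x)" using q unfolding colset_def by auto
      from added[OF qa False] obtain s where s: "s < tc x" "hC s (fst q) \<or> hR s (snd q)" by blast
      then have "hR s (snd q)" using tc_less qx by blast
      then have lt: "tr (snd q) < tc x" using tr_le s(1) by (meson le_less_trans)
      then have "snd q \<in> R" using v x unfolding valid_def by blast
      then show ?thesis using lt qx by (cases q) auto
    qed
  qed
  have fT: "finite ?T" using fA fR by auto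
  have "b \<le> card ?S" using tc_h[of x] sub fT unfolding hC_def by (meson finite_subset not_le)
  also have "\<dots> \<le> card ?T" by (rule card_mono[OF fT sub])
  also have "\<dots> \<le> card {q \<in> A. fst q = x} + card ((\<lambda>y. (x,y)) ` {y \<in> R. tr y < tc x})"
    by (rule card_Un_le)
  also have "\<dots> \<le> card {q \<in> A. fst q = x} + card {y \<in> R. tr y < tc x}"
    using card_image_le[of "{y \<in> R. tr y < tc x}" "\<lambda>y. (x,y)"] fR by simp
  finally show ?thesis .
qed

lemma row_count:
  assumes v: "valid tc tr C R" and y: "y \<in> R"
  shows "a \<le> card {q \<in> A. snd q = y} + card {x \<in> C. tc x < tr y}"
proof -
  have fC: "finite C" using v by (simp add: valid_def)
  let ?S = "rowset (tr y) y"
  let ?T = "{q \<in> A. snd q = y} \<union> (\<lambda>x. (x,y)) ` {x \<in> C. tc x < tr y}"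
  have sub: "?S \<subseteq> ?T"
  proof
    fix q assume q: "q \<in> ?S"
    show "q \<in> ?T"
    proof (cases "q \<in> A")
      case True then show ?thesis using q unfolding rowset_def by auto
    next
      case False
      have qy: "snd q = y" and qa: "q \<in> At (tr y)" using q unfolding rowset_def by auto
      from added[OF qa False] obtain s where s: "s < tr y" "hC s (fst q) \<or> hR s (snd q)" by blast
      then have "hC s (fst q)" using tr_less qy by blast
      then have lt: "tc (fst q) < tr y" using tc_le s(1) by (meson le_less_trans)
      then have "fst q \<in> C" using v y unfolding valid_def by blast
      then show ?thesis using lt qy by (cases q) auto
    qed
  qed
  have fT: "finite ?T" using fA fC by auto
  have "a \<le> card ?S" using tr_h[of y] sub fT unfolding hR_def by (meson finite_subset not_le)
  also have "\<dots> \<le> card ?T" by (rule card_mono[OF fT sub])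
  also have "\<dots> \<le> card {q \<in> A. snd q = y} + card ((\<lambda>x. (x,y)) ` {x \<in> C. tc x < tr y})"
    by (rule card_Un_le)
  also have "\<dots> \<le> card {q \<in> A. snd q = y} + card {x \<in> C. tc x < tr y}"
    using card_image_le[of "{x \<in> C. tc x < tr y}" "\<lambda>x. (x,y)"] fC by simp
  finally show ?thesis .
qed

lemma sum_col: "finite C \<Longrightarrow> (\<Sum>x\<in>C. card {q \<in> A. fst q = x}) = card (A \<inter> {p. fst p \<in> C})"
proof -
  assume fC: "finite C"
  have "A \<inter> {p. fst p \<in> C} = (\<Union>x\<in>C. {q \<in> A. fst q = x})" by auto
  moreover have "card (\<Union>x\<in>C. {q \<in> A. fst q = x}) = (\<Sum>x\<in>C. card {q \<in> A. fst q = x})"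
    by (rule card_UN_disjoint) (use fC fA in auto)
  ultimately show ?thesis by simp
qed

lemma sum_row: "finite R \<Longrightarrow> (\<Sum>y\<in>R. card {q \<in> A. snd q = y}) = card (A \<inter> {p. snd p \<in> R})"
proof -
  assume fR: "finite R"
  have "A \<inter> {p. snd p \<in> R} = (\<Union>y\<in>R. {q \<in> A. snd q = y})" by auto
  moreover have "card (\<Union>y\<in>R. {q \<in> A. snd q = y}) = (\<Sum>y\<in>R. card {q \<in> A. snd q = y})"
    by (rule card_UN_disjoint) (use fR fA in auto)
  ultimately show ?thesis by simp
qed

lemma combine:
  assumes v: "valid tc tr C R"
  shows "card C * b + card R * a \<le> card (A \<inter> {p. fst p \<in> C}) + card (A \<inter> {p. snd p \<in> R}) + card C * card R"
proof -
  have fC: "finite C" and fR: "finite R" using v by (auto simp: valid_def)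
  define P1 where "P1 = Sigma C (\<lambda>x. {y \<in> R. tr y < tc x})"
  define Q2 where "Q2 = Sigma R (\<lambda>y. {x \<in> C. tc x < tr y})"
  define P2 where "P2 = prod.swap ` Q2"
  have c1: "(\<Sum>x\<in>C. card {y \<in> R. tr y < tc x}) = card P1"
    unfolding P1_def by (rule card_SigmaI[symmetric]) (use fC fR in auto)
  have c2: "(\<Sum>y\<in>R. card {x \<in> C. tc x < tr y}) = card Q2"
    unfolding Q2_def by (rule card_SigmaI[symmetric]) (use fC fR in auto)
  have c3: "card P2 = card Q2" unfolding P2_def by (rule card_image) (auto simp: inj_on_def)
  have d: "P1 \<inter> P2 = {}" unfolding P1_def P2_def Q2_def by auto
  have s: "P1 \<union> P2 \<subseteq> C \<times> R" unfolding P1_def P2_def Q2_def by auto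
  have fP: "finite P1" "finite P2" using s fC fR finite_subset by auto
  have "card P1 + card P2 = card (P1 \<union> P2)" using card_Un_disjoint[OF fP d] by simp
  also have "\<dots> \<le> card (C \<times> R)" using s fC fR by (intro card_mono) auto
  also have "\<dots> = card C * card R" by (simp add: card_cartesian_product)
  finally have pp: "card P1 + card P2 \<le> card C * card R" .
  have "card C * b = (\<Sum>x\<in>C. b)" by simp
  also have "\<dots> \<le> (\<Sum>x\<in>C. card {q \<in> A. fst q = x} + card {y \<in> R. tr y < tc x})"
    by (rule sum_mono) (rule col_count[OF v])
  also have "\<dots> = card (A \<inter> {p. fst p \<in> C}) + card P1"
    by (simp add: sum.distrib sum_col[OF fC] c1)
  finally have h1: "card C * b \<le> card (A \<inter> {p. fst p \<in> C}) + card P1" .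
  have "card R * a = (\<Sum>y\<in>R. a)" by simp
  also have "\<dots> \<le> (\<Sum>y\<in>R. card {q \<in> A. snd q = y} + card {x \<in> C. tc x < tr y})"
    by (rule sum_mono) (rule row_count[OF v])
  also have "\<dots> = card (A \<inter> {p. snd p \<in> R}) + card P2"
    by (simp add: sum.distrib sum_row[OF fR] c2 c3)
  finally have h2: "card R * a \<le> card (A \<inter> {p. snd p \<in> R}) + card P2" .
  show ?thesis using h1 h2 pp by linarith
qed

end



lemma square_spans:
  assumes Zs: "Z \<subseteq> rect m m"
  shows "spans Z (rect m m)"
proof -
  define S1 where "S1 = step Z (rect m m)"
  have s1: "(x, y) \<in> S1" if y: "y < m" for x y
  proof (cases "(x,y) \<in> rect m m")
    case True then show ?thesis unfolding S1_def step_def by auto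
  next
    case False
    have sub: "(\<lambda>i. (i, y)) ` {..<m} \<subseteq> row_pts (x,y) (rect m m)"
      using y unfolding row_pts_def rect_def by auto
    have cm: "card ((\<lambda>i. (i, y)) ` {..<m}) = m" by (simp add: card_image inj_on_def)
    have "\<not> counts_in Z (x,y) (rect m m)"
    proof
      assume c: "counts_in Z (x,y) (rect m m)"
      then have f: "finite (row_pts (x,y) (rect m m))" unfolding counts_in_def by simp
      have "m \<le> card (row_pts (x,y) (rect m m))" using card_mono[OF f sub] cm by simp
      moreover have "card (row_pts (x,y) (rect m m)) < m"
        using c Zs unfolding counts_in_def rect_def by auto
      ultimately show False by simp
    qed
    then show ?thesis using False unfolding S1_def step_def by auto
  qed
  have s2: "p \<in> step Z S1" for p
  proof (cases "p \<in> S1")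
    case True then show ?thesis unfolding step_def by auto
  next
    case False
    obtain x y where p: "p = (x,y)" by (cases p)
    have sub: "(\<lambda>j. (x, j)) ` {..<m} \<subseteq> col_pts p S1"
      using s1 p unfolding col_pts_def by auto
    have cm: "card ((\<lambda>j. (x, j)) ` {..<m}) = m" by (simp add: card_image inj_on_def)
    have "\<not> counts_in Z p S1"
    proof
      assume c: "counts_in Z p S1"
      then have f: "finite (col_pts p S1)" unfolding counts_in_def by simp
      have "m \<le> card (col_pts p S1)" using card_mono[OF f sub] cm by simp
      moreover have "card (col_pts p S1) < m"
        using c Zs unfolding counts_in_def rect_def by auto
      ultimately show False by simp
    qed
    then show ?thesis using False unfolding step_def by auto
  qed
  have "(step Z ^^ 2) (rect m m) = step Z S1" unfolding S1_def by (simp add: numeral_2_eq_2)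
  then have "\<forall>p. p \<in> (step Z ^^ 2) (rect m m)" using s2 by simp
  then show ?thesis unfolding spans_def by blast
qed

lemma finite_rect: "finite (rect m n)"
proof -
  have "rect m n \<subseteq> {..<m} \<times> {..<n}" unfolding rect_def by auto
  then show ?thesis by (rule finite_subset) auto
qed

lemma finite_in_rect:
  assumes "finite Z" shows "\<exists>m. Z \<subseteq> rect m m"
proof -
  define m where "m = Suc (Max (fst ` Z \<union> snd ` Z))"
  have "Z \<subseteq> rect m m"
  proof
    fix p assume p: "p \<in> Z"
    have f: "finite (fst ` Z \<union> snd ` Z)" using assms by simp
    have "fst p \<le> Max (fst ` Z \<union> snd ` Z)" "snd p \<le> Max (fst ` Z \<union> snd ` Z)"
      using p Max_ge[OF f] by auto
    then show "p \<in> rect m m" unfolding rect_def m_def by (cases p) auto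
  qed
  then show ?thesis by blast
qed

lemma gamma_witness:
  assumes "finite Z" "Z \<noteq> {}"
  shows "\<exists>A. finite A \<and> card A = gamma Z \<and> spans Z A"
proof -
  obtain m where m: "Z \<subseteq> rect m m" using finite_in_rect[OF assms(1)] by blast
  have spm: "spans Z (rect m m)" by (rule square_spans[OF m])
  let ?P = "\<lambda>n. \<exists>A. finite A \<and> card A = n \<and> spans Z A"
  have "?P (card (rect m m))"
    by (rule exI[of _ "rect m m"]) (simp add: finite_rect spm)
  then have "?P (LEAST n. ?P n)" by (rule LeastI)
  then show ?thesis using assms(2) unfolding gamma_def by simp
qed

theorem mainTheorem9:
  fixes Z Y :: "(nat \<times> nat) set" and a b :: nat
  assumes "zero_set Z" and "finite Z"
    and "a \<ge> 1" and "b \<ge> 1" and "rect a b \<subseteq> Z"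
    and "young_diagram Y" and "Y \<noteq> {}" and "Y \<subseteq> rect (a - 1) (b - 1)"
  shows "real (gamma Z) \<ge> (1/2) * Min ((\<lambda>(k, l). real k * real b + real l * real a - real k * real l
            + real (gamma (shift_down Z l)) + real (gamma (shift_left Z k))) ` outer_boundary Y)"
proof -
  have "(0,0) \<in> rect a b" using assms(3,4) unfolding rect_def by auto
  then have Zne: "Z \<noteq> {}" using assms(5) by blast
  obtain A where fA: "finite A" and cA: "card A = gamma Z" and sp: "spans Z A"
    using gamma_witness[OF assms(2) Zne] by blast
  interpret G: growth Z A a b
    using assms(1,5) sp fA by unfold_locales
  have Y0: "(0,0) \<in> Y"
  proof -
    obtain p where p: "p \<in> Y" using assms(7) by blast
    obtain S where S: "Y = (\<Union>(a, b)\<in>S. rect a b)" using assms(6) unfolding young_diagram_def zero_set_def by blast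
    then obtain a' b' where "(a', b') \<in> S" "p \<in> rect a' b'" using p by blast
    then have "(0,0) \<in> rect a' b'" unfolding rect_def by (cases p) auto
    then show ?thesis using S \<open>(a', b') \<in> S\<close> by blast
  qed
  obtain C R where v: "valid G.tc G.tr C R" and ob: "(card C, card R) \<in> outer_boundary Y"
    using valid_boundary[OF Y0 assms(8)] by blast
  have fC: "finite C" and fR: "finite R" using v by (auto simp: valid_def)
  define k where "k = card C"
  define l where "l = card R"
  have h1: "gamma (shift_left Z k) + card (A \<inter> {p. fst p \<in> C}) \<le> card A"
    unfolding k_def by (rule gamma_left[OF assms(1) fA sp fC])
  have h2: "gamma (shift_down Z l) + card (A \<inter> {p. snd p \<in> R}) \<le> card A"
    unfolding l_def by (rule gamma_down[OF assms(1) fA sp fR])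
  have h3: "k * b + l * a \<le> card (A \<inter> {p. fst p \<in> C}) + card (A \<inter> {p. snd p \<in> R}) + k * l"
    unfolding k_def l_def by (rule G.combine[OF v])
  define f where "f = (\<lambda>(k, l). real k * real b + real l * real a - real k * real l
            + real (gamma (shift_down Z l)) + real (gamma (shift_left Z k)))"
  have fob: "finite (outer_boundary Y)"
  proof -
    have "outer_boundary Y \<subseteq> {..a} \<times> {..b}"
    proof
      fix p assume p: "p \<in> outer_boundary Y"
      obtain u v where uv: "p = (u,v)" by (cases p)
      have "(u \<ge> 1 \<and> (u - 1, v) \<in> Y) \<or> (v \<ge> 1 \<and> (u, v - 1) \<in> Y)"
        using p uv unfolding outer_boundary_def by auto
      then show "p \<in> {..a} \<times> {..b}" using assms(8) uv unfolding rect_def by auto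
    qed
    then show ?thesis by (rule finite_subset) auto
  qed
  have "Min (f ` outer_boundary Y) \<le> f (k, l)"
    using fob ob unfolding k_def l_def by (intro Min_le) auto
  moreover have "f (k, l) \<le> 2 * real (gamma Z)"
  proof -
    have "real (k * b + l * a) \<le> real (card (A \<inter> {p. fst p \<in> C}) + card (A \<inter> {p. snd p \<in> R}) + k * l)"
      using h3 by linarith
    moreover have "real (gamma (shift_left Z k) + card (A \<inter> {p. fst p \<in> C})) \<le> real (card A)"
      using h1 by linarith
    moreover have "real (gamma (shift_down Z l) + card (A \<inter> {p. snd p \<in> R})) \<le> real (card A)"
      using h2 by linarith
    ultimately show ?thesis unfolding f_def using cA by simp
  qed
  ultimately have "Min (f ` outer_boundary Y) \<le> 2 * real (gamma Z)" by linarith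
  then show ?thesis unfolding f_def by simp
qed


end
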